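(* Let $\overline{\mathcal R}(D_x,D_z)$ be defined exactly as $\mathcal R(D_x,D_z)$ except that the joint distribution is allowed to be of the form $p(x,y,z,u,v,w)=p(x,y)p(z|x)p(u|y)p(v|u,z)p(w|u,v,x,y)$. Then $\overline{\mathcal R}(D_x,D_z)=\mathcal R(D_x,D_z)$.
   Context: Let $\mathcal X,\mathcal Y,\mathcal Z,\hat{\mathcal X},\hat{\mathcal Z}$ be finite alphabets, $(X,Y,Z)\sim p(x,y)p(z|x)$, and $d_x:\mathcal X\times\hat{\mathcal X}\to[0,\infty)$, $d_z:\mathcal Z\times\hat{\mathcal Z}\to[0,\infty)$. $\mathcal R(D_x,D_z)$ is the set of all rate triples $(R_1,R_2,R_3)$ with $R_1\ge I(Y;U|Z)$, $R_2\ge I(Z;V|U,X)$, $R_3\ge I(X;W|U,V,Z)$ for some finite-alphabet random variables $U,V,W$ with joint distribution $p(x,y,z,u,v,w)=p(x,y)p(z|x)p(u|y)p(v|u,z)p(w|u,v,x)$ and deterministic functions $\hat X(U,W,Z)$, $\hat Z(U,V,X)$ with $\mathbb E\, d_x(X,\hat X(U,W,Z))\le D_x$ and $\mathbb E\, d_z(Z,\hat Z(U,V,X))\le D_z$. *)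

theory Defs
  imports Complex_Main
begin

text \<open>The auxiliary alphabets of U, V, W (finite, but otherwise arbitrary) are
  represented as initial segments {..<n} of the naturals.\<close>

definition pmf_on :: "('a::finite \<Rightarrow> real) \<Rightarrow> bool" where
  "pmf_on p \<longleftrightarrow> (\<forall>a. 0 \<le> p a) \<and> (\<Sum>a\<in>UNIV. p a) = 1"

definition channel :: "('a \<Rightarrow> 'b::finite \<Rightarrow> real) \<Rightarrow> bool" where
  "channel K \<longleftrightarrow> (\<forall>a. pmf_on (K a))"

definition nat_channel :: "nat \<Rightarrow> ('a \<Rightarrow> nat \<Rightarrow> real) \<Rightarrow> bool" where
  "nat_channel n K \<longleftrightarrow>
     (\<forall>a b. 0 \<le> K a b) \<and> (\<forall>a b. n \<le> b \<longrightarrow> K a b = 0) \<and> (\<forall>a. (\<Sum>b<n. K a b) = 1)"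

definition marg :: "('w \<Rightarrow> real) \<Rightarrow> 'w set \<Rightarrow> ('w \<Rightarrow> 'c) \<Rightarrow> 'c \<Rightarrow> real" where
  "marg P S f c = (\<Sum>t\<in>{t\<in>S. f t = c}. P t)"

text \<open>Conditional mutual information I(A;B|C) (in bits), written as the expectation
  of log (p(a,b,c) p(c) / (p(a,c) p(b,c))).  Terms with P t = 0 contribute 0.\<close>
definition cmi :: "('w \<Rightarrow> real) \<Rightarrow> 'w set \<Rightarrow> ('w \<Rightarrow> 'a) \<Rightarrow> ('w \<Rightarrow> 'b) \<Rightarrow> ('w \<Rightarrow> 'c) \<Rightarrow> real" where
  "cmi P S A B C = (\<Sum>t\<in>S. P t *
     log 2 ((marg P S (\<lambda>t. (A t, B t, C t)) (A t, B t, C t) * marg P S C (C t)) /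
            (marg P S (\<lambda>t. (A t, C t)) (A t, C t) * marg P S (\<lambda>t. (B t, C t)) (B t, C t))))"

definition joint ::
  "('x \<Rightarrow> 'y \<Rightarrow> real) \<Rightarrow> ('x \<Rightarrow> 'z \<Rightarrow> real) \<Rightarrow> ('y \<Rightarrow> nat \<Rightarrow> real) \<Rightarrow>
   (nat \<Rightarrow> 'z \<Rightarrow> nat \<Rightarrow> real) \<Rightarrow> (nat \<Rightarrow> nat \<Rightarrow> 'x \<Rightarrow> 'y \<Rightarrow> nat \<Rightarrow> real) \<Rightarrow>
   ('x \<times> 'y \<times> 'z \<times> nat \<times> nat \<times> nat) \<Rightarrow> real" where
  "joint pxy pzx pu pv pw = (\<lambda>(x,y,z,u,v,w).
      pxy x y * pzx x z * pu y u * pv u z v * pw u v x y w)"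

definition outcomes :: "nat \<Rightarrow> nat \<Rightarrow> nat \<Rightarrow> ('x \<times> 'y \<times> 'z \<times> nat \<times> nat \<times> nat) set" where
  "outcomes nu nv nw = UNIV \<times> UNIV \<times> UNIV \<times> {..<nu} \<times> {..<nv} \<times> {..<nw}"

definition achieves ::
  "('x::finite \<Rightarrow> 'y::finite \<Rightarrow> real) \<Rightarrow> ('x \<Rightarrow> 'z::finite \<Rightarrow> real) \<Rightarrow>
   ('x \<Rightarrow> 'xh::finite \<Rightarrow> real) \<Rightarrow> ('z \<Rightarrow> 'zh::finite \<Rightarrow> real) \<Rightarrow> real \<Rightarrow> real \<Rightarrow>
   nat \<Rightarrow> nat \<Rightarrow> nat \<Rightarrow> ('y \<Rightarrow> nat \<Rightarrow> real) \<Rightarrow> (nat \<Rightarrow> 'z \<Rightarrow> nat \<Rightarrow> real) \<Rightarrow>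
   (nat \<Rightarrow> nat \<Rightarrow> 'x \<Rightarrow> 'y \<Rightarrow> nat \<Rightarrow> real) \<Rightarrow>
   (nat \<Rightarrow> nat \<Rightarrow> 'z \<Rightarrow> 'xh) \<Rightarrow> (nat \<Rightarrow> nat \<Rightarrow> 'x \<Rightarrow> 'zh) \<Rightarrow>
   real \<times> real \<times> real \<Rightarrow> bool" where
  "achieves pxy pzx dx dz Dx Dz nu nv nw pu pv pw xh zh r \<longleftrightarrow>
    (let P = joint pxy pzx pu pv pw;
         S = (outcomes nu nv nw :: ('x \<times> 'y \<times> 'z \<times> nat \<times> nat \<times> nat) set)
     in nat_channel nu pu \<and>
        nat_channel nv (\<lambda>(u,z). pv u z) \<and>
        nat_channel nw (\<lambda>(u,v,x,y). pw u v x y) \<and>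
        (\<Sum>(x,y,z,u,v,w)\<in>S. P (x,y,z,u,v,w) * dx x (xh u w z)) \<le> Dx \<and>
        (\<Sum>(x,y,z,u,v,w)\<in>S. P (x,y,z,u,v,w) * dz z (zh u v x)) \<le> Dz \<and>
        fst r \<ge> cmi P S (\<lambda>(x,y,z,u,v,w). y) (\<lambda>(x,y,z,u,v,w). u) (\<lambda>(x,y,z,u,v,w). z) \<and>
        fst (snd r) \<ge> cmi P S (\<lambda>(x,y,z,u,v,w). z) (\<lambda>(x,y,z,u,v,w). v) (\<lambda>(x,y,z,u,v,w). (u,x)) \<and>
        snd (snd r) \<ge> cmi P S (\<lambda>(x,y,z,u,v,w). x) (\<lambda>(x,y,z,u,v,w). w) (\<lambda>(x,y,z,u,v,w). (u,v,z)))"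

definition rate_region ::
  "('x::finite \<Rightarrow> 'y::finite \<Rightarrow> real) \<Rightarrow> ('x \<Rightarrow> 'z::finite \<Rightarrow> real) \<Rightarrow>
   ('x \<Rightarrow> 'xh::finite \<Rightarrow> real) \<Rightarrow> ('z \<Rightarrow> 'zh::finite \<Rightarrow> real) \<Rightarrow> real \<Rightarrow> real \<Rightarrow>
   (real \<times> real \<times> real) set" where
  "rate_region pxy pzx dx dz Dx Dz = {r. \<exists>nu nv nw pu pv
      (pw :: nat \<Rightarrow> nat \<Rightarrow> 'x \<Rightarrow> nat \<Rightarrow> real) xh zh.
      achieves pxy pzx dx dz Dx Dz nu nv nw pu pv (\<lambda>u v x y w. pw u v x w) xh zh r}"

definition rate_region_bar ::
  "('x::finite \<Rightarrow> 'y::finite \<Rightarrow> real) \<Rightarrow> ('x \<Rightarrow> 'z::finite \<Rightarrow> real) \<Rightarrow>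
   ('x \<Rightarrow> 'xh::finite \<Rightarrow> real) \<Rightarrow> ('z \<Rightarrow> 'zh::finite \<Rightarrow> real) \<Rightarrow> real \<Rightarrow> real \<Rightarrow>
   (real \<times> real \<times> real) set" where
  "rate_region_bar pxy pzx dx dz Dx Dz = {r. \<exists>nu nv nw pu pv pw xh zh.
      achieves pxy pzx dx dz Dx Dz nu nv nw pu pv pw xh zh r}"

end

theory Submission
  imports Defs
begin

lemma marg_as_sum: "finite S \<Longrightarrow> marg P S G c = (\<Sum>t\<in>S. P t * (if G t = c then 1 else 0))"
  unfolding marg_def by (simp add: sum.inter_filter if_distrib cong: if_cong)

lemma push: "finite S \<Longrightarrow> (\<Sum>t\<in>S. P t * \<phi> (F t)) = (\<Sum>v\<in>F`S. marg P S F v * \<phi> v)"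
proof -
  assume fin: "finite S"
  have "(\<Sum>t\<in>S. P t * \<phi> (F t)) = (\<Sum>v\<in>F`S. \<Sum>t\<in>{t\<in>S. F t = v}. P t * \<phi> (F t))"
    using sum.image_gen[OF fin, of "\<lambda>t. P t * \<phi> (F t)" F] .
  also have "\<dots> = (\<Sum>v\<in>F`S. marg P S F v * \<phi> v)"
    unfolding marg_def by (rule sum.cong) (auto simp: sum_distrib_right)
  finally show ?thesis .
qed

lemma marg_comp: "finite S \<Longrightarrow> marg P S (\<lambda>t. h (F t)) c = (\<Sum>v\<in>F`S. marg P S F v * (if h v = c then 1 else 0))"
  using push[of S P "\<lambda>v. if h v = c then 1 else 0" F] marg_as_sum[of S P "\<lambda>t. h (F t)" c] by simp

lemma marg_comp_eq: "finite S \<Longrightarrow> marg P S F = marg P' S F \<Longrightarrow> marg P S (\<lambda>t. h (F t)) = marg P' S (\<lambda>t. h (F t))"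
  by (rule ext) (simp add: marg_comp)

lemma push_eq: "finite S \<Longrightarrow> marg P S F = marg P' S F \<Longrightarrow> (\<Sum>t\<in>S. P t * \<phi> (F t)) = (\<Sum>t\<in>S. P' t * \<phi> (F t))"
  by (simp add: push)

lemma cmi_eq:
  assumes fin: "finite S" and eq: "marg P S (\<lambda>t. (A t, B t, C t)) = marg P' S (\<lambda>t. (A t, B t, C t))"
  shows "cmi P S A B C = cmi P' S A B C"
proof -
  define F where "F = (\<lambda>t. (A t, B t, C t))"
  have eqF: "marg P S F = marg P' S F" using eq by (simp add: F_def)
  have c1: "marg P S C = marg P' S C"
    using marg_comp_eq[OF fin eqF, of "\<lambda>v. snd (snd v)"] by (simp add: F_def)
  have c2: "marg P S (\<lambda>t. (A t, C t)) = marg P' S (\<lambda>t. (A t, C t))"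
    using marg_comp_eq[OF fin eqF, of "\<lambda>v. (fst v, snd (snd v))"] by (simp add: F_def)
  have c3: "marg P S (\<lambda>t. (B t, C t)) = marg P' S (\<lambda>t. (B t, C t))"
    using marg_comp_eq[OF fin eqF, of "\<lambda>v. (fst (snd v), snd (snd v))"] by (simp add: F_def)
  define \<phi> where "\<phi> = (\<lambda>v::_\<times>_\<times>_. log 2 ((marg P' S F v * marg P' S C (snd (snd v))) /
            (marg P' S (\<lambda>t. (A t, C t)) (fst v, snd (snd v)) * marg P' S (\<lambda>t. (B t, C t)) (fst (snd v), snd (snd v)))))"
  have "cmi P S A B C = (\<Sum>t\<in>S. P t * \<phi> (F t))"
    unfolding cmi_def c1 c2 c3 eq by (simp add: \<phi>_def F_def)
  also have "\<dots> = (\<Sum>t\<in>S. P' t * \<phi> (F t))" by (rule push_eq[OF fin eqF])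
  also have "\<dots> = cmi P' S A B C"
    unfolding cmi_def by (simp add: \<phi>_def F_def)
  finally show ?thesis .
qed

lemma fin_out: "finite (outcomes nu nv nw :: ('x::finite \<times> 'y::finite \<times> 'z::finite \<times> nat \<times> nat \<times> nat) set)"
  unfolding outcomes_def by simp

lemma marg6:
  fixes pxy :: "'x::finite \<Rightarrow> 'y::finite \<Rightarrow> real" and pzx :: "'x \<Rightarrow> 'z::finite \<Rightarrow> real"
  assumes ch: "nat_channel nw (\<lambda>(u,v,x,y). pw u v x y)"
  shows "marg (joint pxy pzx pu pv pw) (outcomes nu nv nw) (\<lambda>(x,y,z,u,v,w). (x,y,z,u,v)) (x,y,z,u,v)
     = (if u < nu \<and> v < nv then pxy x y * pzx x z * pu y u * pv u z v else 0)"
proof -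
  have set6: "{t \<in> (outcomes nu nv nw :: ('x \<times> 'y \<times> 'z \<times> nat \<times> nat \<times> nat) set).
       (\<lambda>(x,y,z,u,v,w). (x,y,z,u,v)) t = (x,y,z,u,v)}
     = (if u<nu \<and> v<nv then (\<lambda>w. (x,y,z,u,v,w)) ` {..<nw} else {})"
    by (auto simp: outcomes_def)
  have s1: "(\<Sum>w<nw. pw u v x y w) = 1" using ch unfolding nat_channel_def by auto
  show ?thesis
    unfolding marg_def set6
    by (simp add: sum.reindex inj_on_def joint_def sum_distrib_left[symmetric] s1)
qed

lemma marg5:
  fixes pxy :: "'x::finite \<Rightarrow> 'y::finite \<Rightarrow> real" and pzx :: "'x \<Rightarrow> 'z::finite \<Rightarrow> real"
  shows "marg (joint pxy pzx pu pv pw) (outcomes nu nv nw) (\<lambda>(x,y,z,u,v,w). (x,z,u,v,w)) (x,z,u,v,w)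
     = (if u < nu \<and> v < nv \<and> w < nw then (\<Sum>y\<in>UNIV. pxy x y * pzx x z * pu y u * pv u z v * pw u v x y w) else 0)"
proof -
  have set5: "{t \<in> (outcomes nu nv nw :: ('x \<times> 'y \<times> 'z \<times> nat \<times> nat \<times> nat) set).
       (\<lambda>(x,y,z,u,v,w). (x,z,u,v,w)) t = (x,z,u,v,w)}
     = (if u<nu \<and> v<nv \<and> w<nw then (\<lambda>y. (x,y,z,u,v,w)) ` UNIV else {})"
    by (auto simp: outcomes_def)
  show ?thesis
    unfolding marg_def set5
    by (simp add: sum.reindex inj_on_def joint_def)
qed


lemma marg_comp_eq': "finite S \<Longrightarrow> marg P S F = marg P' S F \<Longrightarrow> G = (\<lambda>t. h (F t)) \<Longrightarrow> marg P S G = marg P' S G"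
  using marg_comp_eq by blast

lemma push_eq': "finite S \<Longrightarrow> marg P S F = marg P' S F \<Longrightarrow> g = (\<lambda>t. P t * \<phi> (F t)) \<Longrightarrow> g' = (\<lambda>t. P' t * \<phi> (F t))
   \<Longrightarrow> sum g S = sum g' S"
  using push_eq by blast

theorem lemma5:
  fixes pxy :: "'x::finite \<Rightarrow> 'y::finite \<Rightarrow> real"
    and pzx :: "'x \<Rightarrow> 'z::finite \<Rightarrow> real"
    and dx :: "'x \<Rightarrow> 'xh::finite \<Rightarrow> real"
    and dz :: "'z \<Rightarrow> 'zh::finite \<Rightarrow> real"
    and Dx Dz :: real
  assumes "pmf_on (\<lambda>(x,y). pxy x y)"
    and "channel pzx"
    and "\<forall>x xh. 0 \<le> dx x xh"
    and "\<forall>z zh. 0 \<le> dz z zh"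
  shows "rate_region_bar pxy pzx dx dz Dx Dz = rate_region pxy pzx dx dz Dx Dz"
proof
  show "rate_region pxy pzx dx dz Dx Dz \<subseteq> rate_region_bar pxy pzx dx dz Dx Dz"
    unfolding rate_region_def rate_region_bar_def by blast
next
  have pxy0: "\<And>x y. 0 \<le> pxy x y" using assms(1) unfolding pmf_on_def by (metis case_prod_conv)
  show "rate_region_bar pxy pzx dx dz Dx Dz \<subseteq> rate_region pxy pzx dx dz Dx Dz"
  proof
    fix r assume "r \<in> rate_region_bar pxy pzx dx dz Dx Dz"
    then obtain nu nv nw pu pv pw xh zh where
      ach: "achieves pxy pzx dx dz Dx Dz nu nv nw pu pv pw xh zh r"
      unfolding rate_region_bar_def by blast
    define S where "S = (outcomes nu nv nw :: ('x \<times> 'y \<times> 'z \<times> nat \<times> nat \<times> nat) set)"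
    have fin: "finite S" unfolding S_def by (rule fin_out)
    have chu: "nat_channel nu pu" and chw: "nat_channel nw (\<lambda>(u,v,x,y). pw u v x y)"
      using ach unfolding achieves_def Let_def by auto
    have pu0: "\<And>y u. 0 \<le> pu y u" using chu unfolding nat_channel_def by auto
    have pw0: "\<And>u v x y w. 0 \<le> pw u v x y w" using chw unfolding nat_channel_def by auto
    have pwz: "\<And>u v x y w. nw \<le> w \<Longrightarrow> pw u v x y w = 0" using chw unfolding nat_channel_def by auto
    have pws: "\<And>u v x y. (\<Sum>w<nw. pw u v x y w) = 1" using chw unfolding nat_channel_def by auto
    have nw0: "0 < nw" using pws[of undefined undefined undefined undefined] by (cases nw) auto
    define D where "D u x = (\<Sum>y\<in>UNIV. pxy x y * pu y u)" for u x
    define N where "N u v x w = (\<Sum>y\<in>UNIV. pxy x y * pu y u * pw u v x y w)" for u v x w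
    define pw' where "pw' u v x w = (if D u x \<noteq> 0 then N u v x w / D u x else (if w = 0 then 1 else 0))" for u v x w
    have D0: "0 \<le> D u x" for u x unfolding D_def by (intro sum_nonneg mult_nonneg_nonneg pxy0 pu0)
    have N0: "0 \<le> N u v x w" for u v x w unfolding N_def by (intro sum_nonneg mult_nonneg_nonneg pxy0 pu0 pw0)
    have DN: "D u x * pw' u v x w = N u v x w" for u v x w
    proof (cases "D u x = 0")
      case True
      have "\<forall>y\<in>UNIV. pxy x y * pu y u = 0"
        using True unfolding D_def by (subst sum_nonneg_eq_0_iff[symmetric]) (auto intro: mult_nonneg_nonneg pxy0 pu0)
      then have "N u v x w = 0" unfolding N_def by (intro sum.neutral) auto
      then show ?thesis using True by simp
    qed (simp add: pw'_def)
    have chw': "nat_channel nw (\<lambda>(u,v,x,y). pw' u v x)"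
      unfolding nat_channel_def
    proof (intro conjI allI impI)
      fix a b show "0 \<le> (case a of (u,v,x,y) \<Rightarrow> pw' u v x) b"
        using D0 N0 by (cases a) (auto simp: pw'_def)
    next
      fix a b assume "nw \<le> b"
      then show "(case a of (u,v,x,y) \<Rightarrow> pw' u v x) b = 0"
        using nw0 by (cases a) (auto simp: pw'_def N_def pwz)
    next
      fix a show "(\<Sum>b<nw. (case a of (u,v,x,y) \<Rightarrow> pw' u v x) b) = 1"
      proof (cases a)
        case (fields u v x y)
        have "(\<Sum>w<nw. N u v x w) = D u x"
          unfolding N_def D_def by (subst sum.swap) (simp add: sum_distrib_left[symmetric] pws)
        show ?thesis
        proof (cases "D u x = 0")
          case True
          have "(\<Sum>b<nw. pw' u v x b) = (\<Sum>b<nw. if b = 0 then 1 else 0)"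
            by (rule sum.cong) (simp_all add: pw'_def True)
          also have "\<dots> = 1" using nw0 by (simp add: sum.delta)
          finally show ?thesis using fields by simp
        next
          case False
          have "(\<Sum>b<nw. pw' u v x b) = (\<Sum>b<nw. N u v x b) / D u x"
            by (simp add: pw'_def False sum_divide_distrib)
          then show ?thesis using fields False \<open>(\<Sum>w<nw. N u v x w) = D u x\<close> by simp
        qed
      qed
    qed
    define P where "P = joint pxy pzx pu pv pw"
    define P' where "P' = joint pxy pzx pu pv (\<lambda>u v x y w. pw' u v x w)"
    define F5 where "F5 = (\<lambda>(x::'x,y::'y,z::'z,u::nat,v::nat,w::nat). (x,z,u,v,w))"
    define F6 where "F6 = (\<lambda>(x::'x,y::'y,z::'z,u::nat,v::nat,w::nat). (x,y,z,u,v))"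
    have eq6: "marg P S F6 = marg P' S F6"
    proof
      fix c show "marg P S F6 c = marg P' S F6 c"
        unfolding P_def P'_def S_def F6_def
        by (cases c) (simp add: marg6[OF chw] marg6[OF chw'])
    qed
    have eq5: "marg P S F5 = marg P' S F5"
    proof
      fix c show "marg P S F5 c = marg P' S F5 c"
      proof (cases c)
        case (fields x z u v w)
        have "(\<Sum>y\<in>UNIV. pxy x y * pzx x z * pu y u * pv u z v * pw u v x y w)
            = pzx x z * pv u z v * N u v x w"
          unfolding N_def by (simp add: sum_distrib_left algebra_simps)
        also have "\<dots> = pzx x z * pv u z v * (D u x * pw' u v x w)" by (simp add: DN)
        also have "\<dots> = (\<Sum>y\<in>UNIV. pxy x y * pzx x z * pu y u * pv u z v * pw' u v x w)"
          unfolding D_def by (simp add: sum_distrib_left sum_distrib_right algebra_simps)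
        finally show ?thesis unfolding P_def P'_def S_def F5_def fields marg5 by simp
      qed
    qed
    have A: "achieves pxy pzx dx dz Dx Dz nu nv nw pu pv (\<lambda>u v x y w. pw' u v x w) xh zh r"
    proof -
      have h: "nat_channel nu pu \<and> nat_channel nv (\<lambda>(u,z). pv u z) \<and>
        (\<Sum>(x,y,z,u,v,w)\<in>S. P (x,y,z,u,v,w) * dx x (xh u w z)) \<le> Dx \<and>
        (\<Sum>(x,y,z,u,v,w)\<in>S. P (x,y,z,u,v,w) * dz z (zh u v x)) \<le> Dz \<and>
        fst r \<ge> cmi P S (\<lambda>(x,y,z,u,v,w). y) (\<lambda>(x,y,z,u,v,w). u) (\<lambda>(x,y,z,u,v,w). z) \<and>
        fst (snd r) \<ge> cmi P S (\<lambda>(x,y,z,u,v,w). z) (\<lambda>(x,y,z,u,v,w). v) (\<lambda>(x,y,z,u,v,w). (u,x)) \<and>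
        snd (snd r) \<ge> cmi P S (\<lambda>(x,y,z,u,v,w). x) (\<lambda>(x,y,z,u,v,w). w) (\<lambda>(x,y,z,u,v,w). (u,v,z))"
        using ach unfolding achieves_def Let_def P_def S_def by auto
      have d1: "(\<Sum>(x,y,z,u,v,w)\<in>S. P (x,y,z,u,v,w) * dx x (xh u w z))
          = (\<Sum>(x,y,z,u,v,w)\<in>S. P' (x,y,z,u,v,w) * dx x (xh u w z))"
        by (rule push_eq'[OF fin eq5, where \<phi>="\<lambda>(x,z,u,v,w). dx x (xh u w z)"])
           (auto simp: fun_eq_iff F5_def)
      have d2: "(\<Sum>(x,y,z,u,v,w)\<in>S. P (x,y,z,u,v,w) * dz z (zh u v x))
          = (\<Sum>(x,y,z,u,v,w)\<in>S. P' (x,y,z,u,v,w) * dz z (zh u v x))"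
        by (rule push_eq'[OF fin eq5, where \<phi>="\<lambda>(x,z,u,v,w). dz z (zh u v x)"])
           (auto simp: fun_eq_iff F5_def)
      have c1: "cmi P S (\<lambda>(x,y,z,u,v,w). y) (\<lambda>(x,y,z,u,v,w). u) (\<lambda>(x,y,z,u,v,w). z)
          = cmi P' S (\<lambda>(x,y,z,u,v,w). y) (\<lambda>(x,y,z,u,v,w). u) (\<lambda>(x,y,z,u,v,w). z)"
        by (rule cmi_eq[OF fin], rule marg_comp_eq'[OF fin eq6, where h="\<lambda>(x,y,z,u,v). (y,u,z)"])
           (auto simp: fun_eq_iff F6_def)
      have c2: "cmi P S (\<lambda>(x,y,z,u,v,w). z) (\<lambda>(x,y,z,u,v,w). v) (\<lambda>(x,y,z,u,v,w). (u,x))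
          = cmi P' S (\<lambda>(x,y,z,u,v,w). z) (\<lambda>(x,y,z,u,v,w). v) (\<lambda>(x,y,z,u,v,w). (u,x))"
        by (rule cmi_eq[OF fin], rule marg_comp_eq'[OF fin eq6, where h="\<lambda>(x,y,z,u,v). (z,v,u,x)"])
           (auto simp: fun_eq_iff F6_def)
      have c3: "cmi P S (\<lambda>(x,y,z,u,v,w). x) (\<lambda>(x,y,z,u,v,w). w) (\<lambda>(x,y,z,u,v,w). (u,v,z))
          = cmi P' S (\<lambda>(x,y,z,u,v,w). x) (\<lambda>(x,y,z,u,v,w). w) (\<lambda>(x,y,z,u,v,w). (u,v,z))"
        by (rule cmi_eq[OF fin], rule marg_comp_eq'[OF fin eq5, where h="\<lambda>(x,z,u,v,w). (x,w,u,v,z)"])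
           (auto simp: fun_eq_iff F5_def)
      show ?thesis
        unfolding achieves_def Let_def P'_def[symmetric] S_def[symmetric]
        using h chw' d1 d2 c1 c2 c3 by simp
    qed
    then show "r \<in> rate_region pxy pzx dx dz Dx Dz"
      unfolding rate_region_def by blast
  qed
qed

end
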